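(* Let $G$ be a graph with $n$ vertices and adjacency matrix $A$. (i) If all eigenvalues of $A$ are equal to $\pm 1$, then $G=\frac{n}{2}K_2$. (ii) If all but one eigenvalue of $A$ (counted with multiplicity) are equal to $\pm 1$, then $G$ is a disjoint union of complete graphs in which all but one of the connected components are equal to $K_2$. (iii) If $A$ has exactly two eigenvalues $r$ and $s$ with $r\geq s$ (counted with multiplicity) different from $\pm 1$, then either $r>1$ and $s<-1$, or $G$ is a disjoint union of complete graphs with exactly two connected components different from $K_2$.
   Context: Graphs are finite, simple and undirected. Eigenvalues of a graph are those of its adjacency matrix. $\frac{n}{2}K_2$ denotes the disjoint union of $n/2$ copies of the complete graph $K_2$ (a perfect matching). *)

theory Defs
  imports "Jordan_Normal_Form.Char_Poly" "HOL-Computational_Algebra.Polynomial"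
begin

definition simple_graph :: "nat \<Rightarrow> (nat \<Rightarrow> nat \<Rightarrow> bool) \<Rightarrow> bool" where
  "simple_graph n E \<longleftrightarrow>
     (\<forall>i j. E i j \<longrightarrow> i < n \<and> j < n) \<and>
     (\<forall>i j. E i j \<longrightarrow> E j i) \<and>
     (\<forall>i. \<not> E i i)"

definition adj_matrix :: "nat \<Rightarrow> (nat \<Rightarrow> nat \<Rightarrow> bool) \<Rightarrow> real mat" where
  "adj_matrix n E = mat n n (\<lambda>(i, j). if E i j then 1 else 0)"

text \<open>The eigenvalues of a real matrix counted with multiplicity: the multiset of
  roots of its characteristic polynomial (for symmetric matrices all roots are real).\<close>
definition eigenvalues_mset :: "real mat \<Rightarrow> real multiset" where
  "eigenvalues_mset A = proots (char_poly A)"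

definition component :: "nat \<Rightarrow> (nat \<Rightarrow> nat \<Rightarrow> bool) \<Rightarrow> nat \<Rightarrow> nat set" where
  "component n E v = {u. u < n \<and> E\<^sup>*\<^sup>* v u}"

definition components :: "nat \<Rightarrow> (nat \<Rightarrow> nat \<Rightarrow> bool) \<Rightarrow> nat set set" where
  "components n E = component n E ` {..<n}"

definition union_of_cliques :: "nat \<Rightarrow> (nat \<Rightarrow> nat \<Rightarrow> bool) \<Rightarrow> bool" where
  "union_of_cliques n E \<longleftrightarrow>
     (\<forall>C \<in> components n E. \<forall>x \<in> C. \<forall>y \<in> C. x \<noteq> y \<longrightarrow> E x y)"

text \<open>G = (n/2) K_2, i.e. G is a perfect matching: every vertex has exactly one neighbour.\<close>
definition perfect_matching :: "nat \<Rightarrow> (nat \<Rightarrow> nat \<Rightarrow> bool) \<Rightarrow> bool" where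
  "perfect_matching n E \<longleftrightarrow> (\<forall>v < n. card {u. E v u} = 1)"

text \<open>Number of connected components that are not K_2 (in a union of cliques,
  a component is K_2 iff it has exactly 2 vertices).\<close>
definition num_non_K2_components :: "nat \<Rightarrow> (nat \<Rightarrow> nat \<Rightarrow> bool) \<Rightarrow> nat" where
  "num_non_K2_components n E = card {C \<in> components n E. card C \<noteq> 2}"

end

theory Submission
  imports Defs "Jordan_Normal_Form.Schur_Decomposition"
begin


lemma map_poly_of_real_inj:
  fixes p q :: "real poly"
  assumes "map_poly complex_of_real p = map_poly complex_of_real q"
  shows "p = q"
proof (rule poly_eqI)
  fix i
  have "coeff (map_poly complex_of_real p) i = coeff (map_poly complex_of_real q) i"
    using assms by simp
  then show "coeff p i = coeff q i" by (simp add: coeff_map_poly)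
qed

lemma map_poly_of_real_prod_lin:
  assumes "\<forall>a\<in>set as. Im a = 0"
  shows "map_poly complex_of_real (\<Prod>e\<leftarrow>map Re as. [:-e,1:]) = (\<Prod>a\<leftarrow>as. [:-a,1:])"
  using assms
proof (induct as)
  case Nil then show ?case by simp
next
  case (Cons a as)
  have "complex_of_real (Re a) = a" using Cons.prems by (simp add: complex_eqI)
  then have "map_poly complex_of_real [:- Re a, 1:] = [:-a,1:]" by simp
  interpret m: map_poly_comm_ring_hom complex_of_real ..
  have "map_poly complex_of_real (\<Prod>e\<leftarrow>map Re (a#as). [:-e,1:])
     = map_poly complex_of_real ([:-Re a,1:] * (\<Prod>e\<leftarrow>map Re as. [:-e,1:]))" by simp
  also have "\<dots> = map_poly complex_of_real [:-Re a,1:] * map_poly complex_of_real (\<Prod>e\<leftarrow>map Re as. [:-e,1:])"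
    by (rule m.hom_mult)
  also have "\<dots> = [:-a,1:] * (\<Prod>a\<leftarrow>as. [:-a,1:])"
    using Cons \<open>map_poly complex_of_real [:- Re a, 1:] = [:-a,1:]\<close> by simp
  finally show ?case by simp
qed

lemma real_eigenvalue_sym:
  fixes A :: "real mat"
  assumes A: "A \<in> carrier_mat n n" and sym: "\<forall>i<n. \<forall>j<n. A$$(i,j) = A$$(j,i)"
    and ev: "eigenvalue (map_mat complex_of_real A) a"
  shows "Im a = 0"
proof -
  let ?Ac = "map_mat complex_of_real A"
  obtain v where v: "eigenvector ?Ac v a" using ev unfolding eigenvalue_def by auto
  have vc: "v \<in> carrier_vec n" and v0: "v \<noteq> 0\<^sub>v n" and eq: "?Ac *\<^sub>v v = a \<cdot>\<^sub>v v"
    using v A unfolding eigenvector_def by auto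
  define T where "T = (\<Sum>i<n. \<Sum>j<n. complex_of_real (A$$(i,j)) * cnj (v$i) * v$j)"
  have comp: "(?Ac *\<^sub>v v) $ i = (\<Sum>j<n. complex_of_real (A$$(i,j)) * v$j)" if "i < n" for i
    using that A vc by (auto simp: scalar_prod_def lessThan_atLeast0 intro!: sum.cong)
  have "T = (\<Sum>i<n. cnj (v$i) * (?Ac *\<^sub>v v) $ i)"
    unfolding T_def by (auto simp: comp sum_distrib_left mult.commute mult.left_commute intro!: sum.cong)
  also have "\<dots> = (\<Sum>i<n. cnj (v$i) * (a * v$i))"
    using eq vc by (auto intro!: sum.cong)
  also have "\<dots> = a * complex_of_real (\<Sum>i<n. (cmod (v$i))^2)"
  proof -
    have "cnj z * (a*z) = a * complex_of_real ((cmod z)^2)" for z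
      using complex_norm_square by auto
    then have "(\<Sum>i<n. cnj (v$i) * (a * v$i)) = (\<Sum>i<n. a * complex_of_real ((cmod (v$i))^2))"
      by (intro sum.cong) auto
    also have "\<dots> = a * complex_of_real (\<Sum>i<n. (cmod (v$i))^2)"
      by (simp only: sum_distrib_left of_real_sum)
    finally show ?thesis .
  qed
  finally have Ta: "T = a * complex_of_real (\<Sum>i<n. (cmod (v$i))^2)" .
  have "cnj T = (\<Sum>i<n. \<Sum>j<n. complex_of_real (A$$(i,j)) * v$i * cnj (v$j))"
    unfolding T_def by simp
  also have "\<dots> = (\<Sum>j<n. \<Sum>i<n. complex_of_real (A$$(i,j)) * v$i * cnj (v$j))"
    by (rule sum.swap)
  also have "\<dots> = T" unfolding T_def
    using sym by (auto intro!: sum.cong simp: mult.commute mult.left_commute)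
  finally have cT: "cnj T = T" .
  define r where "r = (\<Sum>i<n. (cmod (v$i))^2)"
  have "r > 0"
  proof -
    obtain i where i: "i < n" "v $ i \<noteq> 0" using v0 vc by (metis eq_vecI carrier_vecD index_zero_vec(1,2))
    have "r \<ge> (cmod (v$i))^2" unfolding r_def
      by (rule member_le_sum) (use i in auto)
    moreover have "(cmod (v$i))^2 > 0" using i by simp
    ultimately show ?thesis by linarith
  qed
  from cT Ta have "cnj a * complex_of_real r = a * complex_of_real r" unfolding r_def by simp
  then have "cnj a = a" using \<open>r > 0\<close> by simp
  then have "Im (cnj a) = Im a" by simp
  then show ?thesis by simp
qed

lemma sym_split:
  fixes A :: "real mat"
  assumes A: "A \<in> carrier_mat n n" and sym: "\<forall>i<n. \<forall>j<n. A$$(i,j) = A$$(j,i)"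
  shows "\<exists>es. char_poly A = (\<Prod>e\<leftarrow>es. [:-e,1:]) \<and> length es = n"
proof -
  let ?Ac = "map_mat complex_of_real A"
  have Ac: "?Ac \<in> carrier_mat n n" using A by simp
  obtain as where as: "char_poly ?Ac = (\<Prod>a\<leftarrow>as. [:-a,1:])" "length as = n"
    using char_poly_factorized[OF Ac] by blast
  have re: "\<forall>a\<in>set as. Im a = 0"
  proof
    fix a assume "a \<in> set as"
    then have "poly (char_poly ?Ac) a = 0" unfolding as(1)
      by (simp add: poly_prod_list prod_list_zero_iff)
    then have "eigenvalue ?Ac a" using eigenvalue_root_char_poly[OF Ac] by simp
    then show "Im a = 0" by (rule real_eigenvalue_sym[OF A sym])
  qed
  have "map_poly complex_of_real (char_poly A) = char_poly ?Ac"
    by (rule of_real_hom.char_poly_hom[OF A, symmetric])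
  also have "\<dots> = map_poly complex_of_real (\<Prod>e\<leftarrow>map Re as. [:-e,1:])"
    using as(1) map_poly_of_real_prod_lin[OF re] by simp
  finally have "char_poly A = (\<Prod>e\<leftarrow>map Re as. [:-e,1:])" by (rule map_poly_of_real_inj)
  then show ?thesis using as(2) by (intro exI[of _ "map Re as"]) simp
qed

lemma proots_lin: "proots (\<Prod>e\<leftarrow>es. [:-e,1:]) = mset (es :: real list)"
proof (induct es)
  case Nil then show ?case by simp
next
  case (Cons e es)
  have "(\<Prod>e\<leftarrow>es. [:-e,1:]) \<noteq> (0::real poly)" by (auto simp: prod_list_zero_iff)
  then have "proots ([:-e,1:] * (\<Prod>e\<leftarrow>es. [:-e,1:])) = proots [:-e,1:] + proots (\<Prod>e\<leftarrow>es. [:-e,1:])"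
    by (intro proots_mult) auto
  moreover have "proots [:-e,1:] = {#e#}" using proots_linear_factor[of "-e"] by simp
  ultimately show ?case using Cons by simp
qed

lemma mult_entry:
  fixes X Y :: "'a::comm_ring_1 mat"
  assumes "X \<in> carrier_mat n n" "Y \<in> carrier_mat n n" "i < n" "j < n"
  shows "(X*Y)$$(i,j) = (\<Sum>l<n. X$$(i,l) * Y$$(l,j))"
  using assms by (simp add: scalar_prod_def lessThan_atLeast0)

lemma trace_comm:
  fixes X Y :: "'a::comm_ring_1 mat"
  assumes X: "X \<in> carrier_mat n n" and Y: "Y \<in> carrier_mat n n"
  shows "(\<Sum>i<n. (X*Y)$$(i,i)) = (\<Sum>i<n. (Y*X)$$(i,i))"
proof -
  have "(\<Sum>i<n. (X*Y)$$(i,i)) = (\<Sum>i<n. \<Sum>l<n. X$$(i,l) * Y$$(l,i))"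
    using X Y by (auto simp: mult_entry[OF X Y] simp del: index_mult_mat intro!: sum.cong)
  also have "\<dots> = (\<Sum>l<n. \<Sum>i<n. Y$$(l,i) * X$$(i,l))"
    by (subst sum.swap) (simp add: mult.commute)
  also have "\<dots> = (\<Sum>i<n. (Y*X)$$(i,i))"
    using X Y by (auto simp: mult_entry[OF Y X] simp del: index_mult_mat intro!: sum.cong)
  finally show ?thesis .
qed

lemma upper_tri_pow:
  fixes B :: "'a::comm_ring_1 mat"
  assumes B: "B \<in> carrier_mat n n" and ut: "upper_triangular B"
  shows "upper_triangular (B ^\<^sub>m k) \<and> (\<forall>j<n. (B ^\<^sub>m k)$$(j,j) = (B$$(j,j))^k)"
proof (induct k)
  case 0
  then show ?case using B by auto
next
  case (Suc k)
  let ?C = "B ^\<^sub>m k"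
  have C: "?C \<in> carrier_mat n n" using B by simp
  have utC: "\<And>i j. i < n \<Longrightarrow> j < i \<Longrightarrow> ?C$$(i,j) = 0" using Suc C by (auto simp: upper_triangular_def)
  have utB: "\<And>i j. i < n \<Longrightarrow> j < i \<Longrightarrow> B$$(i,j) = 0" using ut B by (auto simp: upper_triangular_def)
  have 1: "upper_triangular (?C * B)"
  proof -
    have "(?C*B)$$(i,j) = 0" if "i < n" "j < i" for i j
    proof -
      have "(?C*B)$$(i,j) = (\<Sum>l<n. ?C$$(i,l) * B$$(l,j))"
        using that C B by (simp add: mult_entry[OF C B] del: index_mult_mat)
      also have "\<dots> = 0"
      proof (rule sum.neutral, rule ballI)
        fix l assume "l \<in> {..<n}"
        then show "?C$$(i,l) * B$$(l,j) = 0"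
          using utC[of i l] utB[of l j] that by (cases "l < i") auto
      qed
      finally show ?thesis .
    qed
    then show ?thesis using C B by (auto simp: upper_triangular_def)
  qed
  have 2: "(?C * B)$$(j,j) = (B$$(j,j))^Suc k" if j: "j < n" for j
  proof -
    have "(?C*B)$$(j,j) = (\<Sum>l<n. ?C$$(j,l) * B$$(l,j))"
      using j C B by (simp add: mult_entry[OF C B] del: index_mult_mat)
    also have "\<dots> = ?C$$(j,j) * B$$(j,j)"
    proof -
      have "(\<Sum>l<n. ?C$$(j,l) * B$$(l,j)) = ?C$$(j,j) * B$$(j,j) + (\<Sum>l\<in>{..<n}-{j}. ?C$$(j,l) * B$$(l,j))"
        by (rule sum.remove) (use j in auto)
      also have "(\<Sum>l\<in>{..<n}-{j}. ?C$$(j,l) * B$$(l,j)) = 0"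
      proof (rule sum.neutral, rule ballI)
        fix l assume "l \<in> {..<n}-{j}"
        then show "?C$$(j,l) * B$$(l,j) = 0"
          using utC[of j l] utB[of l j] j by (cases "l < j") auto
      qed
      finally show ?thesis by simp
    qed
    finally show ?thesis using Suc j by simp
  qed
  show ?case using 1 2 by simp
qed

lemma trace_pow_es:
  fixes A :: "real mat"
  assumes A: "A \<in> carrier_mat n n" and cp: "char_poly A = (\<Prod>e\<leftarrow>es. [:-e,1:])"
  shows "(\<Sum>i<n. (A ^\<^sub>m k)$$(i,i)) = (\<Sum>e\<leftarrow>es. e^k)"
proof -
  obtain B P Q where sd: "schur_decomposition A es = (B,P,Q)" by (cases "schur_decomposition A es") auto
  from schur_decomposition[OF A cp sd]
  have wit: "similar_mat_wit A B P Q" and ut: "upper_triangular B" and dg: "diag_mat B = es" by auto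
  note W = similar_mat_witD2[OF A wit]
  have B: "B \<in> carrier_mat n n" and P: "P \<in> carrier_mat n n" and Q: "Q \<in> carrier_mat n n"
    using W by auto
  have Ak: "A ^\<^sub>m k = P * (B ^\<^sub>m k) * Q" by (rule similar_mat_wit_pow_id[OF wit])
  have Bk: "B ^\<^sub>m k \<in> carrier_mat n n" using B by simp
  have "(\<Sum>i<n. (A ^\<^sub>m k)$$(i,i)) = (\<Sum>i<n. (P * ((B ^\<^sub>m k) * Q))$$(i,i))"
    unfolding Ak using P Bk Q by simp
  also have "\<dots> = (\<Sum>i<n. (((B ^\<^sub>m k) * Q) * P)$$(i,i))"
    by (rule trace_comm[OF P]) (use Bk Q in simp)
  also have "((B ^\<^sub>m k) * Q) * P = B ^\<^sub>m k"
    using Bk Q P W(2) by (simp add: right_mult_one_mat[OF Bk])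
  also have "(\<Sum>i<n. (B ^\<^sub>m k)$$(i,i)) = (\<Sum>i<n. (B$$(i,i))^k)"
    using upper_tri_pow[OF B ut] by simp
  also have "\<dots> = (\<Sum>i<n. (es!i)^k)"
    using dg B by (auto simp: diag_mat_def intro!: sum.cong)
  also have "\<dots> = (\<Sum>e\<leftarrow>es. e^k)"
  proof -
    have len: "length es = n" using dg B by (auto simp: diag_mat_def)
    show ?thesis unfolding sum_list_sum_nth len[symmetric]
      by (simp add: lessThan_atLeast0)
  qed
  finally show ?thesis .
qed



primrec pw :: "nat \<Rightarrow> (nat \<Rightarrow> nat \<Rightarrow> real) \<Rightarrow> nat \<Rightarrow> nat \<Rightarrow> nat \<Rightarrow> real" where
  "pw n a 0 i j = (if i = j then 1 else 0)"
| "pw n a (Suc k) i j = (\<Sum>l<n. a i l * pw n a k l j)"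

definition polyA :: "nat \<Rightarrow> (nat \<Rightarrow> nat \<Rightarrow> real) \<Rightarrow> real poly \<Rightarrow> nat \<Rightarrow> nat \<Rightarrow> real" where
  "polyA n a g i j = (\<Sum>t\<le>degree g. coeff g t * pw n a t i j)"

lemma delta_sum:
  assumes "(i::nat) < n"
  shows "(\<Sum>l<n. (if i = l then 1 else 0) * f l) = (f i :: real)"
proof -
  have "(\<Sum>l<n. (if i = l then 1 else 0) * f l) = (\<Sum>l<n. if i = l then f l else 0)"
    by (rule sum.cong) auto
  also have "\<dots> = f i" using assms by simp
  finally show ?thesis .
qed

lemma pw_add:
  assumes "i < n"
  shows "pw n a (s+t) i j = (\<Sum>l<n. pw n a s i l * pw n a t l j)"
  using assms
proof (induct s arbitrary: i)
  case 0
  then show ?case by (simp add: delta_sum)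
next
  case (Suc s)
  have "pw n a (Suc s + t) i j = (\<Sum>l<n. a i l * pw n a (s+t) l j)" by simp
  also have "\<dots> = (\<Sum>l<n. a i l * (\<Sum>m<n. pw n a s l m * pw n a t m j))"
    using Suc by (intro sum.cong) auto
  also have "\<dots> = (\<Sum>l<n. \<Sum>m<n. a i l * (pw n a s l m * pw n a t m j))"
    by (simp add: sum_distrib_left)
  also have "\<dots> = (\<Sum>m<n. \<Sum>l<n. a i l * (pw n a s l m * pw n a t m j))"
    by (rule sum.swap)
  also have "\<dots> = (\<Sum>m<n. (\<Sum>l<n. a i l * pw n a s l m) * pw n a t m j)"
    by (simp add: sum_distrib_right mult.assoc)
  finally show ?case by simp
qed

lemma pw_one:
  assumes "j < n"
  shows "pw n a 1 i j = a i j"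
proof -
  have "pw n a 1 i j = (\<Sum>l<n. a i l * (if l = j then 1 else 0))" by simp
  also have "\<dots> = (\<Sum>l<n. if l = j then a i l else 0)" by (rule sum.cong) auto
  also have "\<dots> = a i j" using assms by simp
  finally show ?thesis .
qed

lemma pw_sym:
  assumes sym: "\<And>i j. a i j = a j i" and "i < n" "j < n"
  shows "pw n a k i j = pw n a k j i"
  using assms(2,3)
proof (induct k arbitrary: i j)
  case 0 then show ?case by simp
next
  case (Suc k)
  have "pw n a (Suc k) j i = pw n a (k+1) j i" by simp
  also have "\<dots> = (\<Sum>l<n. pw n a k j l * pw n a 1 l i)" by (rule pw_add) fact
  also have "\<dots> = (\<Sum>l<n. a i l * pw n a k l j)"
  proof (rule sum.cong)
    fix l assume "l \<in> {..<n}"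
    then have "pw n a 1 l i = a l i" "pw n a k j l = pw n a k l j" using pw_one[of i n a l] Suc by auto
    then show "pw n a k j l * pw n a 1 l i = a i l * pw n a k l j" by (simp add: sym mult.commute)
  qed simp
  finally show ?case by simp
qed

lemma polyA_le:
  assumes "degree g \<le> N"
  shows "polyA n a g i j = (\<Sum>t\<le>N. coeff g t * pw n a t i j)"
  unfolding polyA_def
  by (rule sum.mono_neutral_left) (use assms in \<open>auto simp: coeff_eq_0\<close>)

lemma polyA_add: "polyA n a (p + q) i j = polyA n a p i j + polyA n a q i j"
proof -
  let ?N = "max (degree p) (degree q)"
  have "degree (p+q) \<le> ?N" by (rule degree_add_le) auto
  then show ?thesis
    by (simp add: polyA_le[of _ ?N] sum.distrib distrib_right)
qed

lemma polyA_diff: "polyA n a (p - q) i j = polyA n a p i j - polyA n a q i j"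
proof -
  let ?N = "max (degree p) (degree q)"
  have "degree (p-q) \<le> ?N" by (rule degree_diff_le) auto
  then show ?thesis
    by (simp add: polyA_le[of _ ?N] sum_subtractf left_diff_distrib)
qed

lemma polyA_smult: "polyA n a (Polynomial.smult c p) i j = c * polyA n a p i j"
  by (simp add: polyA_le[of _ "degree p"] sum_distrib_left mult.assoc)

lemma polyA_const: "polyA n a [:c:] i j = c * (if i = j then 1 else 0)"
  by (simp add: polyA_le[of _ 0])

lemma polyA_pCons0: "polyA n a (pCons 0 p) i j = (\<Sum>l<n. a i l * polyA n a p l j)"
proof -
  have "polyA n a (pCons 0 p) i j = (\<Sum>t\<le>Suc (degree p). coeff (pCons 0 p) t * pw n a t i j)"
    by (rule polyA_le) (simp add: degree_pCons_le)
  also have "\<dots> = (\<Sum>t\<le>degree p. coeff p t * pw n a (Suc t) i j)"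
    by (subst sum.atMost_Suc_shift) simp
  also have "\<dots> = (\<Sum>t\<le>degree p. \<Sum>l<n. coeff p t * (a i l * pw n a t l j))"
    by (simp add: sum_distrib_left)
  also have "\<dots> = (\<Sum>l<n. \<Sum>t\<le>degree p. coeff p t * (a i l * pw n a t l j))"
    by (rule sum.swap)
  also have "\<dots> = (\<Sum>l<n. a i l * polyA n a p l j)"
    by (simp add: polyA_def sum_distrib_left mult.left_commute)
  finally show ?thesis .
qed

lemma polyA_pCons: "polyA n a (pCons c p) i j = c * (if i = j then 1 else 0) + (\<Sum>l<n. a i l * polyA n a p l j)"
proof -
  have "pCons c p = [:c:] + pCons 0 p" by (rule poly_eqI) (simp add: coeff_pCons split: nat.split)
  then show ?thesis by (simp only: polyA_add polyA_const polyA_pCons0)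
qed

lemma polyA_mult:
  assumes "i < n"
  shows "polyA n a (p * q) i j = (\<Sum>l<n. polyA n a p i l * polyA n a q l j)"
  using assms
proof (induct p arbitrary: i rule: pCons_induct)
  case 0 then show ?case by (simp add: polyA_def)
next
  case (pCons c p)
  have "pCons c p * q = Polynomial.smult c q + pCons 0 (p * q)" by (rule mult_pCons_left)
  then have "polyA n a (pCons c p * q) i j = c * polyA n a q i j + (\<Sum>l<n. a i l * polyA n a (p*q) l j)"
    by (simp only: polyA_add polyA_smult polyA_pCons0)
  also have "\<dots> = c * polyA n a q i j + (\<Sum>l<n. a i l * (\<Sum>m<n. polyA n a p l m * polyA n a q m j))"
    using pCons by simp
  also have "\<dots> = (\<Sum>m<n. (c * (if i = m then 1 else 0) + (\<Sum>l<n. a i l * polyA n a p l m)) * polyA n a q m j)"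
  proof -
    have e1: "(\<Sum>m<n. (c * (if i = m then 1 else 0)) * polyA n a q m j) = c * polyA n a q i j"
    proof -
      have "(\<Sum>m<n. (c * (if i = m then 1 else 0)) * polyA n a q m j) = (\<Sum>m<n. if i = m then c * polyA n a q m j else 0)"
        by (rule sum.cong) auto
      also have "\<dots> = c * polyA n a q i j" using pCons.prems by simp
      finally show ?thesis .
    qed
    have e2: "(\<Sum>m<n. (\<Sum>l<n. a i l * polyA n a p l m) * polyA n a q m j)
        = (\<Sum>l<n. a i l * (\<Sum>m<n. polyA n a p l m * polyA n a q m j))"
      by (simp only: sum_distrib_left sum_distrib_right mult.assoc) (rule sum.swap)
    show ?thesis by (simp only: distrib_right sum.distrib e1 e2)
  qed
  also have "\<dots> = (\<Sum>m<n. polyA n a (pCons c p) i m * polyA n a q m j)"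
    by (simp only: polyA_pCons)
  finally show ?case .
qed

definition spec :: "nat \<Rightarrow> (nat \<Rightarrow> nat \<Rightarrow> real) \<Rightarrow> real list \<Rightarrow> bool" where
  "spec n a es \<longleftrightarrow> (\<forall>k. (\<Sum>i<n. pw n a k i i) = (\<Sum>e\<leftarrow>es. e^k))"

lemma sum_list_swap: "(\<Sum>t\<in>T. c t * (\<Sum>e\<leftarrow>es. f t e)) = (\<Sum>e\<leftarrow>es. \<Sum>t\<in>T. c t * (f t e :: real))"
  by (induct es) (simp_all add: sum.distrib distrib_left)

lemma trace_poly:
  assumes "spec n a es"
  shows "(\<Sum>i<n. polyA n a g i i) = (\<Sum>e\<leftarrow>es. poly g e)"
proof -
  have "(\<Sum>i<n. polyA n a g i i) = (\<Sum>t\<le>degree g. coeff g t * (\<Sum>i<n. pw n a t i i))"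
    unfolding polyA_def
  proof -
    have "(\<Sum>i<n. \<Sum>t\<le>degree g. coeff g t * pw n a t i i) = (\<Sum>t\<le>degree g. \<Sum>i<n. coeff g t * pw n a t i i)"
      by (rule sum.swap)
    then show "(\<Sum>i<n. \<Sum>t\<le>degree g. coeff g t * pw n a t i i) = (\<Sum>t\<le>degree g. coeff g t * (\<Sum>i<n. pw n a t i i))"
      by (simp add: sum_distrib_left)
  qed
  also have "\<dots> = (\<Sum>t\<le>degree g. coeff g t * (\<Sum>e\<leftarrow>es. e^t))"
    using assms unfolding spec_def by simp
  also have "\<dots> = (\<Sum>e\<leftarrow>es. \<Sum>t\<le>degree g. coeff g t * e^t)" by (rule sum_list_swap)
  also have "\<dots> = (\<Sum>e\<leftarrow>es. poly g e)" by (simp add: poly_altdef)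
  finally show ?thesis .
qed

lemma polyA_sym:
  assumes sym: "\<And>i j. a i j = a j i" and "i < n" "j < n"
  shows "polyA n a g i j = polyA n a g j i"
  unfolding polyA_def using pw_sym[OF sym assms(2,3)] by simp

lemma frob_zero:
  assumes sym: "\<And>i j. a i j = a j i" and sp: "spec n a es"
    and z: "\<forall>e\<in>set es. poly d e = 0" and ij: "i < n" "j < n"
  shows "polyA n a d i j = 0"
proof -
  let ?D = "polyA n a d"
  have "(\<Sum>i<n. polyA n a (d*d) i i) = (\<Sum>e\<leftarrow>es. poly (d*d) e)" by (rule trace_poly[OF sp])
  also have "\<dots> = 0" using z by (induct es) auto
  finally have "(\<Sum>i<n. polyA n a (d*d) i i) = 0" .
  moreover have "polyA n a (d*d) i i = (\<Sum>l<n. (?D i l)^2)" if "i < n" for i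
  proof -
    have "polyA n a (d*d) i i = (\<Sum>l<n. ?D i l * ?D l i)" using that by (rule polyA_mult)
    also have "\<dots> = (\<Sum>l<n. (?D i l)^2)"
    proof (rule sum.cong)
      fix l assume "l \<in> {..<n}"
      then have "?D l i = ?D i l" using polyA_sym[OF sym _ that] by simp
      then show "?D i l * ?D l i = (?D i l)^2" by (simp add: power2_eq_square)
    qed simp
    finally show ?thesis .
  qed
  ultimately have S: "(\<Sum>i<n. \<Sum>l<n. (?D i l)^2) = 0" by simp
  have "\<forall>i\<in>{..<n}. (\<Sum>l<n. (?D i l)^2) = 0"
    using sum_nonneg_eq_0_iff[of "{..<n}" "\<lambda>i. \<Sum>l<n. (?D i l)^2"] S by (simp add: sum_nonneg)
  then have "(\<Sum>l<n. (?D i l)^2) = 0" using ij by simp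
  then have "\<forall>l\<in>{..<n}. (?D i l)^2 = 0"
    using sum_nonneg_eq_0_iff[of "{..<n}" "\<lambda>l. (?D i l)^2"] by simp
  then have "(?D i j)^2 = 0" using ij by simp
  then show ?thesis by simp
qed

lemma interp:
  fixes f :: "real \<Rightarrow> real"
  assumes "finite X"
  shows "\<exists>h. \<forall>x\<in>X. poly h x = f x"
  using assms
proof (induct X rule: finite_induct)
  case empty then show ?case by auto
next
  case (insert y X)
  then obtain h where h: "\<forall>x\<in>X. poly h x = f x" by blast
  define P where "P = (\<Prod>x\<in>X. [:-x,1:])"
  have P0: "poly P x = 0" if "x \<in> X" for x
    unfolding P_def poly_prod using insert that by (auto intro: prod_zero)
  have Py: "poly P y \<noteq> 0"
    unfolding P_def poly_prod using insert by auto
  define h' where "h' = h + Polynomial.smult ((f y - poly h y) / poly P y) P"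
  have "\<forall>x\<in>insert y X. poly h' x = f x"
    using h P0 Py unfolding h'_def by auto
  then show ?case by blast
qed

lemma gram:
  assumes sym: "\<And>i j. a i j = a j i" and sp: "spec n a es"
    and nn: "\<forall>e\<in>set es. poly q e \<ge> 0"
  shows "\<exists>H. \<forall>i<n. \<forall>j<n. polyA n a q i j = (\<Sum>l<n. H i l * H j l)"
proof -
  obtain h where h: "\<forall>e\<in>set es. poly h e = sqrt (poly q e)"
    using interp[of "set es" "\<lambda>e. sqrt (poly q e)"] by auto
  have z: "\<forall>e\<in>set es. poly (h*h - q) e = 0"
    using h nn by (auto simp: real_sqrt_mult_self)
  have "\<forall>i<n. \<forall>j<n. polyA n a q i j = (\<Sum>l<n. polyA n a h i l * polyA n a h j l)"
  proof (intro allI impI)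
    fix i j assume ij: "i < n" "j < n"
    have "polyA n a (h*h - q) i j = 0" by (rule frob_zero[OF sym sp z ij])
    then have "polyA n a q i j = polyA n a (h*h) i j" by (simp add: polyA_diff)
    also have "\<dots> = (\<Sum>l<n. polyA n a h i l * polyA n a h j l)"
    proof -
      have "polyA n a h l j = polyA n a h j l" if "l \<in> {..<n}" for l
        using polyA_sym[OF sym _ ij(2)] that by simp
      then show ?thesis using ij by (simp add: polyA_mult)
    qed
    finally show "polyA n a q i j = (\<Sum>l<n. polyA n a h i l * polyA n a h j l)" .
  qed
  then show ?thesis by blast
qed

definition adjf :: "(nat \<Rightarrow> nat \<Rightarrow> bool) \<Rightarrow> nat \<Rightarrow> nat \<Rightarrow> real" where
  "adjf E i j = (if E i j then 1 else 0)"

lemma adjf_sym: "simple_graph n E \<Longrightarrow> adjf E i j = adjf E j i"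
  unfolding adjf_def simple_graph_def by auto

lemma polyA_lin:
  assumes "j < n"
  shows "polyA n a [:c,d:] i j = c * (if i = j then 1 else 0) + d * a i j"
proof -
  have "(\<Sum>l<n. a i l * polyA n a [:d:] l j) = (\<Sum>l<n. if l = j then d * a i l else 0)"
    by (rule sum.cong) (auto simp: polyA_const)
  also have "\<dots> = d * a i j" using assms by simp
  finally show ?thesis by (simp add: polyA_pCons)
qed

lemma quad:
  fixes u v w :: "nat \<Rightarrow> real"
  shows "(\<Sum>l\<in>L. (x*u l + y*v l + z*w l)^2) =
    x^2*(\<Sum>l\<in>L. u l*u l) + y^2*(\<Sum>l\<in>L. v l*v l) + z^2*(\<Sum>l\<in>L. w l*w l)
    + 2*x*y*(\<Sum>l\<in>L. u l*v l) + 2*x*z*(\<Sum>l\<in>L. u l*w l) + 2*y*z*(\<Sum>l\<in>L. v l*w l)"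
proof -
  have "(\<Sum>l\<in>L. (x*u l + y*v l + z*w l)^2) = (\<Sum>l\<in>L. x^2*(u l*u l) + y^2*(v l*v l) + z^2*(w l*w l)
    + 2*x*y*(u l*v l) + 2*x*z*(u l*w l) + 2*y*z*(v l*w l))"
    by (rule sum.cong) (auto simp: power2_eq_square algebra_simps)
  also have "\<dots> = x^2*(\<Sum>l\<in>L. u l*u l) + y^2*(\<Sum>l\<in>L. v l*v l) + z^2*(\<Sum>l\<in>L. w l*w l)
    + 2*x*y*(\<Sum>l\<in>L. u l*v l) + 2*x*z*(\<Sum>l\<in>L. u l*w l) + 2*y*z*(\<Sum>l\<in>L. v l*w l)"
    by (simp only: sum.distrib sum_distrib_left)
  finally show ?thesis .
qed

lemma no_bad_triple:
  assumes g: "simple_graph n E" and sp: "spec n (adjf E) es"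
    and ev: "(\<forall>e\<in>set es. e \<ge> -1) \<or> (\<forall>e\<in>set es. e \<le> 1)"
    and ik: "E i k" and jk: "E j k" and ij: "i \<noteq> j"
  shows "E i j"
proof (rule ccontr)
  assume nij: "\<not> E i j"
  let ?a = "adjf E"
  have sym: "\<And>i j. ?a i j = ?a j i" using adjf_sym[OF g] .
  have n: "i < n" "j < n" "k < n" using g ik jk unfolding simple_graph_def by auto
  have d: "i \<noteq> k" "j \<noteq> k" using g ik jk unfolding simple_graph_def by auto
  have aik: "?a i k = 1" "?a j k = 1" "?a i j = 0" using ik jk nij by (auto simp: adjf_def)
  have aii: "?a i i = 0" "?a j j = 0" "?a k k = 0" using g by (auto simp: adjf_def simple_graph_def)
  let ?s = "if (\<forall>e\<in>set es. e \<ge> -1) then (1::real) else -1"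
  have nn: "\<forall>e\<in>set es. poly [:1, ?s:] e \<ge> 0"
  proof
    fix e assume e: "e \<in> set es"
    show "poly [:1, ?s:] e \<ge> 0"
    proof (cases "\<forall>e\<in>set es. e \<ge> -1")
      case True then have "e \<ge> -1" using e by blast
      moreover have "?s = 1" using True by (rule if_P)
      ultimately show ?thesis by simp
    next
      case False then have "e \<le> 1" using ev e by blast
      moreover have "?s = -1" using False by (rule if_not_P)
      ultimately show ?thesis by simp
    qed
  qed
  obtain H where H: "\<forall>i<n. \<forall>j<n. polyA n ?a [:1, ?s:] i j = (\<Sum>l<n. H i l * H j l)"
    using gram[OF sym sp nn] by blast
  define s where "s = ?s"
  have s2: "s * s = 1" unfolding s_def by simp
  define M where "M = (\<lambda>i j. polyA n ?a [:1, s:] i j)"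
  have Mv: "M i i = 1" "M j j = 1" "M k k = 1" "M i j = 0" "M i k = s" "M j k = s"
    unfolding M_def using n d ij aik aii by (auto simp: polyA_lin)
  have HM: "(\<Sum>l<n. H p l * H q l) = M p q" if "p < n" "q < n" for p q
    using H that unfolding M_def s_def by simp
  define z where "z = - 2 * s"
  have "0 \<le> (\<Sum>l<n. (1*H i l + 1*H j l + z*H k l)^2)" by (rule sum_nonneg) simp
  also have "\<dots> = 1^2*(\<Sum>l<n. H i l*H i l) + 1^2*(\<Sum>l<n. H j l*H j l) + z^2*(\<Sum>l<n. H k l*H k l)
    + 2*1*1*(\<Sum>l<n. H i l*H j l) + 2*1*z*(\<Sum>l<n. H i l*H k l) + 2*1*z*(\<Sum>l<n. H j l*H k l)"
    by (rule quad)
  also have "\<dots> = M i i + M j j + z^2 * M k k + 2 * M i j + 2*z*M i k + 2*z*M j k"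
    using n by (simp only: HM power_one mult_1_left mult_1_right)
  also have "\<dots> = 2 + 4 * (s*s) - 8 * (s * s)"
    unfolding Mv z_def by (simp add: power2_eq_square algebra_simps)
  also have "\<dots> = -2" unfolding s2 by simp
  finally show False by simp
qed

lemma rt_sym:
  assumes g: "simple_graph n E" and r: "E\<^sup>*\<^sup>* x y"
  shows "E\<^sup>*\<^sup>* y x"
  using r
proof (induct rule: rtranclp.induct)
  case (rtrancl_refl a) then show ?case by simp
next
  case (rtrancl_into_rtrancl a b c)
  have "E c b" using g rtrancl_into_rtrancl(3) unfolding simple_graph_def by auto
  then show ?case using rtrancl_into_rtrancl(2) by (rule converse_rtranclp_into_rtranclp)
qed

lemma closed_rt:
  assumes g: "simple_graph n E" and cl: "\<forall>i j k. E i k \<and> E j k \<and> i \<noteq> j \<longrightarrow> E i j"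
    and r: "E\<^sup>*\<^sup>* v u"
  shows "v = u \<or> E v u"
  using r
proof (induct rule: rtranclp.induct)
  case (rtrancl_refl a) then show ?case by simp
next
  case (rtrancl_into_rtrancl a b c)
  show ?case
  proof (cases "a = b")
    case True then show ?thesis using rtrancl_into_rtrancl(3) by simp
  next
    case False
    then have "E a b" using rtrancl_into_rtrancl(2) by simp
    moreover have "E c b" using g rtrancl_into_rtrancl(3) unfolding simple_graph_def by auto
    ultimately show ?thesis using cl by blast
  qed
qed

lemma cliques_of_closed:
  assumes g: "simple_graph n E" and cl: "\<forall>i j k. E i k \<and> E j k \<and> i \<noteq> j \<longrightarrow> E i j"
  shows "union_of_cliques n E"
  unfolding union_of_cliques_def components_def
proof (intro ballI impI)
  fix C x y assume C: "C \<in> component n E ` {..<n}" and x: "x \<in> C" and y: "y \<in> C" and xy: "x \<noteq> y"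
  obtain v where "C = component n E v" using C by auto
  then have "E\<^sup>*\<^sup>* v x" "E\<^sup>*\<^sup>* v y" using x y unfolding component_def by auto
  then have "E\<^sup>*\<^sup>* x y" using rt_sym[OF g] by (meson rtranclp_trans)
  then show "E x y" using closed_rt[OF g cl] xy by blast
qed

lemma cliques:
  assumes g: "simple_graph n E" and sp: "spec n (adjf E) es"
    and ev: "(\<forall>e\<in>set es. e \<ge> -1) \<or> (\<forall>e\<in>set es. e \<le> 1)"
  shows "union_of_cliques n E"
proof (rule cliques_of_closed[OF g], intro allI impI)
  fix i j k assume h: "E i k \<and> E j k \<and> i \<noteq> j"
  then have ik: "E i k" and jk: "E j k" and ij: "i \<noteq> j" by auto
  show "E i j" by (rule no_bad_triple[OF g sp ev ik jk ij])
qed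

context
  fixes n :: nat and E :: "nat \<Rightarrow> nat \<Rightarrow> bool"
  assumes g: "simple_graph n E" and uc: "union_of_cliques n E"
begin

lemma cmp_self: "v < n \<Longrightarrow> v \<in> component n E v"
  unfolding component_def by simp

lemma cmp_sub: "component n E v \<subseteq> {..<n}"
  unfolding component_def by auto

lemma cmp_fin: "finite (component n E v)"
  using cmp_sub finite_subset by blast

lemma cmp_card: "v < n \<Longrightarrow> card (component n E v) \<ge> 1"
  using cmp_self cmp_fin by (metis One_nat_def Suc_leI card_gt_0_iff empty_iff)

lemma cmp_eq:
  assumes "u \<in> component n E v"
  shows "component n E u = component n E v"
proof -
  have vu: "E\<^sup>*\<^sup>* v u" using assms unfolding component_def by auto
  have uv: "E\<^sup>*\<^sup>* u v" using rt_sym[OF g vu] .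
  show ?thesis unfolding component_def using vu uv by (auto intro: rtranclp_trans)
qed

lemma E_iff:
  assumes i: "i < n"
  shows "E i j \<longleftrightarrow> (j \<in> component n E i \<and> i \<noteq> j)"
proof
  assume "E i j"
  then show "j \<in> component n E i \<and> i \<noteq> j" using g unfolding simple_graph_def component_def by auto
next
  assume h: "j \<in> component n E i \<and> i \<noteq> j"
  have "component n E i \<in> components n E" using i unfolding components_def by auto
  then show "E i j" using uc h cmp_self[OF i] unfolding union_of_cliques_def by blast
qed

lemma sum_adj:
  assumes i: "i < n"
  shows "(\<Sum>l<n. adjf E i l * f l) = (\<Sum>l\<in>component n E i - {i}. f l)"
proof -
  have "(\<Sum>l<n. adjf E i l * f l) = (\<Sum>l<n. if l \<in> component n E i - {i} then f l else 0)"
    by (rule sum.cong) (auto simp: adjf_def E_iff[OF i])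
  also have "\<dots> = (\<Sum>l\<in>{..<n} \<inter> (component n E i - {i}). f l)"
    by (simp add: sum.inter_restrict)
  also have "{..<n} \<inter> (component n E i - {i}) = component n E i - {i}" using cmp_sub by auto
  finally show ?thesis .
qed

definition cc :: "nat \<Rightarrow> real \<Rightarrow> real" where
  "cc k m = ((m - 1)^k - (-1)^k) / m"

lemma pw_formula:
  assumes "i < n" "j < n"
  shows "pw n (adjf E) k i j = (if i = j then (-1)^k else 0)
     + (if j \<in> component n E i then cc k (real (card (component n E i))) else 0)"
  using assms
proof (induct k arbitrary: i j)
  case 0
  then show ?case by (simp add: cc_def)
next
  case (Suc k)
  let ?C = "component n E i"
  let ?S = "?C - {i}"
  let ?m = "real (card ?C)"
  let ?c = "cc k ?m"
  have m1: "?m \<ge> 1" using cmp_card[OF Suc.prems(1)] by simp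
  have cardS: "real (card ?S) = ?m - 1"
    using cmp_self[OF Suc.prems(1)] cmp_fin cmp_card[OF Suc.prems(1)] by (simp add: of_nat_diff)
  have "pw n (adjf E) (Suc k) i j = (\<Sum>l<n. adjf E i l * pw n (adjf E) k l j)" by simp
  also have "\<dots> = (\<Sum>l\<in>?S. pw n (adjf E) k l j)" by (rule sum_adj[OF Suc.prems(1)])
  also have "\<dots> = (\<Sum>l\<in>?S. (if l = j then (-1)^k else 0) + (if j \<in> ?C then ?c else 0))"
  proof (rule sum.cong)
    fix l assume l: "l \<in> ?S"
    then have ln: "l < n" using cmp_sub by auto
    have "component n E l = ?C" using l cmp_eq by auto
    then show "pw n (adjf E) k l j = (if l = j then (-1)^k else 0) + (if j \<in> ?C then ?c else 0)"
      using Suc.hyps[OF ln Suc.prems(2)] by simp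
  qed simp
  also have "\<dots> = (if j \<in> ?S then (-1)^k else 0) + (?m - 1) * (if j \<in> ?C then ?c else 0)"
    using cmp_fin by (simp add: sum.distrib cardS[symmetric])
  also have "\<dots> = (if i = j then (-1)^Suc k else 0) + (if j \<in> ?C then cc (Suc k) ?m else 0)"
  proof -
    have mz: "?m \<noteq> 0" using m1 by simp
    show ?thesis
    proof (cases "j \<in> ?C")
      case False
      then show ?thesis using cmp_self[OF Suc.prems(1)] cmp_self[OF Suc.prems(2)] by auto
    next
      case True
      show ?thesis
      proof (cases "i = j")
        case True
        then show ?thesis using mz \<open>j \<in> ?C\<close> by (simp add: cc_def field_simps)
      next
        case False
        then show ?thesis using \<open>j \<in> ?C\<close> mz by (simp add: cc_def field_simps)
      qed
    qed
  qed
  finally show ?case .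
qed

lemma polyA_diag:
  assumes "i < n"
  shows "polyA n (adjf E) g i i = poly g (-1) + (poly g (real (card (component n E i)) - 1) - poly g (-1)) / real (card (component n E i))"
proof -
  let ?m = "real (card (component n E i))"
  have "polyA n (adjf E) g i i = (\<Sum>t\<le>degree g. coeff g t * ((-1)^t + cc t ?m))"
    unfolding polyA_def using assms cmp_self[OF assms] by (simp add: pw_formula)
  also have "\<dots> = (\<Sum>t\<le>degree g. coeff g t * (-1)^t) + (\<Sum>t\<le>degree g. coeff g t * (?m - 1)^t - coeff g t * (-1)^t) / ?m"
    by (simp add: cc_def sum.distrib distrib_left sum_divide_distrib right_diff_distrib)
  also have "\<dots> = (\<Sum>t\<le>degree g. coeff g t * (-1)^t) + ((\<Sum>t\<le>degree g. coeff g t * (?m - 1)^t) - (\<Sum>t\<le>degree g. coeff g t * (-1)^t)) / ?m"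
    by (simp only: sum_subtractf)
  also have "\<dots> = poly g (-1) + (poly g (?m - 1) - poly g (-1)) / ?m"
    by (simp add: poly_altdef)
  finally show ?thesis .
qed

lemma trace_cliques:
  "(\<Sum>i<n. polyA n (adjf E) g i i) = real n * poly g (-1) + (\<Sum>C\<in>components n E. poly g (real (card C) - 1) - poly g (-1))"
proof -
  define F where "F = (\<lambda>x::real. poly g (x - 1) - poly g (-1))"
  have "(\<Sum>i<n. polyA n (adjf E) g i i) = (\<Sum>i<n. poly g (-1) + F (real (card (component n E i))) / real (card (component n E i)))"
    by (rule sum.cong) (simp_all add: polyA_diag F_def)
  also have "\<dots> = real n * poly g (-1) + (\<Sum>i<n. F (real (card (component n E i))) / real (card (component n E i)))"
    by (simp add: sum.distrib)
  also have "(\<Sum>i<n. F (real (card (component n E i))) / real (card (component n E i)))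
      = (\<Sum>C\<in>components n E. \<Sum>i\<in>{x\<in>{..<n}. component n E x = C}. F (real (card (component n E i))) / real (card (component n E i)))"
    unfolding components_def by (rule sum.group[symmetric]) auto
  also have "\<dots> = (\<Sum>C\<in>components n E. F (real (card C)))"
  proof (rule sum.cong)
    fix C assume "C \<in> components n E"
    then obtain v where v: "v < n" "C = component n E v" unfolding components_def by auto
    have set: "{x\<in>{..<n}. component n E x = C} = C"
    proof
      show "{x\<in>{..<n}. component n E x = C} \<subseteq> C" using cmp_self v by auto
      show "C \<subseteq> {x\<in>{..<n}. component n E x = C}"
      proof
        fix x assume x: "x \<in> C"
        then have "x < n" using cmp_sub v by blast
        moreover have "component n E x = C" using cmp_eq x v by auto
        ultimately show "x \<in> {x\<in>{..<n}. component n E x = C}" by simp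
      qed
    qed
    have "(\<Sum>i\<in>{x\<in>{..<n}. component n E x = C}. F (real (card (component n E i))) / real (card (component n E i)))
        = (\<Sum>i\<in>C. F (real (card C)) / real (card C))"
      unfolding set by (rule sum.cong) (use cmp_eq v in auto)
    also have "\<dots> = F (real (card C))"
      using cmp_card[OF v(1)] v by simp
    finally show "(\<Sum>i\<in>{x\<in>{..<n}. component n E x = C}. F (real (card (component n E i))) / real (card (component n E i))) = F (real (card C))" .
  qed simp
  finally show ?thesis unfolding F_def .
qed

lemma count_cliques:
  assumes sp: "spec n (adjf E) es"
  shows "length (filter (\<lambda>x. x \<noteq> 1 \<and> x \<noteq> -1) es) = num_non_K2_components n E"
proof -
  define chi where "chi = (\<lambda>x::real. if x \<noteq> 1 \<and> x \<noteq> -1 then 1 else (0::real))"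
  define X where "X = set es \<union> {-1} \<union> (\<lambda>C. real (card C) - 1) ` components n E"
  have finc: "finite (components n E)" unfolding components_def by simp
  have "finite X" unfolding X_def using finc by simp
  then obtain h where h: "\<forall>x\<in>X. poly h x = chi x" using interp by blast
  have "real (length (filter (\<lambda>x. x \<noteq> 1 \<and> x \<noteq> -1) es)) = (\<Sum>e\<leftarrow>es. chi e)"
    unfolding chi_def by (induct es) auto
  also have "\<dots> = (\<Sum>e\<leftarrow>es. poly h e)"
  proof -
    have "\<forall>e\<in>set es. poly h e = chi e" using h unfolding X_def by auto
    then show ?thesis by (induct es) auto
  qed
  also have "\<dots> = (\<Sum>i<n. polyA n (adjf E) h i i)" by (rule trace_poly[OF sp, symmetric])
  also have "\<dots> = real n * poly h (-1) + (\<Sum>C\<in>components n E. poly h (real (card C) - 1) - poly h (-1))"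
    by (rule trace_cliques)
  also have "\<dots> = (\<Sum>C\<in>components n E. if card C \<noteq> 2 then 1 else 0)"
  proof -
    have m1: "poly h (-1) = 0" using h unfolding X_def chi_def by auto
    have "poly h (real (card C) - 1) = (if card C \<noteq> 2 then 1 else 0)" if C: "C \<in> components n E" for C
    proof -
      obtain v where v: "v < n" "C = component n E v" using C unfolding components_def by auto
      have c1: "card C \<ge> 1" using cmp_card v by simp
      have "poly h (real (card C) - 1) = chi (real (card C) - 1)" using h C unfolding X_def by auto
      also have "\<dots> = (if card C \<noteq> 2 then 1 else 0)"
        using c1 unfolding chi_def by auto
      finally show ?thesis .
    qed
    then show ?thesis using m1 by (auto intro!: sum.cong)
  qed
  also have "\<dots> = real (card {C \<in> components n E. card C \<noteq> 2})"
    using finc by (simp add: sum.If_cases Int_def)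
  finally show ?thesis unfolding num_non_K2_components_def by linarith
qed

end


lemma adj_entry: "i < n \<Longrightarrow> j < n \<Longrightarrow> adj_matrix n E $$ (i,j) = adjf E i j"
  by (simp add: adj_matrix_def adjf_def)

lemma adj_carrier: "adj_matrix n E \<in> carrier_mat n n"
  by (simp add: adj_matrix_def)

lemma adj_pow:
  assumes i: "i < n" and j: "j < n"
  shows "(adj_matrix n E ^\<^sub>m k) $$ (i,j) = pw n (adjf E) k i j"
  using j
proof (induct k arbitrary: j)
  case 0
  then show ?case using i adj_carrier[of n E] by simp
next
  case (Suc k)
  let ?A = "adj_matrix n E"
  have Ak: "?A ^\<^sub>m k \<in> carrier_mat n n" using adj_carrier[of n E] by simp
  have "(?A ^\<^sub>m Suc k) $$ (i,j) = ((?A ^\<^sub>m k) * ?A) $$ (i,j)" by simp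
  also have "\<dots> = (\<Sum>l<n. (?A ^\<^sub>m k)$$(i,l) * ?A$$(l,j))"
    by (rule mult_entry[OF Ak adj_carrier i Suc.prems])
  also have "\<dots> = (\<Sum>l<n. pw n (adjf E) k i l * pw n (adjf E) 1 l j)"
  proof (rule sum.cong)
    fix l assume l: "l \<in> {..<n}"
    have "(?A ^\<^sub>m k)$$(i,l) = pw n (adjf E) k i l"
    proof -
      have "l < n" using l by simp
      then show ?thesis using Suc.hyps by blast
    qed
    moreover have "?A$$(l,j) = pw n (adjf E) 1 l j"
    proof -
      have "?A$$(l,j) = adjf E l j" using l Suc.prems by (simp add: adj_entry)
      also have "\<dots> = pw n (adjf E) 1 l j" by (rule pw_one[symmetric]) (rule Suc.prems)
      finally show ?thesis .
    qed
    ultimately show "(?A ^\<^sub>m k)$$(i,l) * ?A$$(l,j) = pw n (adjf E) k i l * pw n (adjf E) 1 l j" by simp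
  qed simp
  also have "\<dots> = pw n (adjf E) (k+1) i j" by (rule pw_add[OF i, symmetric])
  finally show ?case by simp
qed

theorem proposition2p2:
  fixes n :: nat and E :: "nat \<Rightarrow> nat \<Rightarrow> bool"
  assumes "simple_graph n E"
  shows "((\<forall>x \<in># eigenvalues_mset (adj_matrix n E). x = 1 \<or> x = -1)
           \<longrightarrow> perfect_matching n E)
       \<and> (size (filter_mset (\<lambda>x. x \<noteq> 1 \<and> x \<noteq> -1) (eigenvalues_mset (adj_matrix n E))) = 1
           \<longrightarrow> union_of_cliques n E \<and> num_non_K2_components n E = 1)
       \<and> (\<forall>r s :: real. r \<ge> s \<and>
           filter_mset (\<lambda>x. x \<noteq> 1 \<and> x \<noteq> -1) (eigenvalues_mset (adj_matrix n E)) = {#r, s#}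
           \<longrightarrow> (r > 1 \<and> s < -1) \<or> (union_of_cliques n E \<and> num_non_K2_components n E = 2))"
proof -
  let ?A = "adj_matrix n E"
  have g: "simple_graph n E" by fact
  have A: "?A \<in> carrier_mat n n" by (rule adj_carrier)
  have sym: "\<forall>i<n. \<forall>j<n. ?A$$(i,j) = ?A$$(j,i)"
    using g by (auto simp: adj_entry adjf_def simple_graph_def)
  obtain es where cp: "char_poly ?A = (\<Prod>e\<leftarrow>es. [:-e,1:])" and len: "length es = n"
    using sym_split[OF A sym] by blast
  have ev: "eigenvalues_mset ?A = mset es"
    unfolding eigenvalues_mset_def cp by (rule proots_lin)
  have sp: "spec n (adjf E) es"
    unfolding spec_def
  proof
    fix k
    have "(\<Sum>i<n. pw n (adjf E) k i i) = (\<Sum>i<n. (?A ^\<^sub>m k)$$(i,i))"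
      by (rule sum.cong) (simp_all add: adj_pow)
    also have "\<dots> = (\<Sum>e\<leftarrow>es. e^k)" by (rule trace_pow_es[OF A cp])
    finally show "(\<Sum>i<n. pw n (adjf E) k i i) = (\<Sum>e\<leftarrow>es. e^k)" .
  qed
  define P where "P = (\<lambda>x::real. x \<noteq> 1 \<and> x \<noteq> -1)"
  have cnt: "size (filter_mset P (mset es)) = num_non_K2_components n E"
    if uc: "union_of_cliques n E"
  proof -
    have "size (filter_mset P (mset es)) = length (filter P es)"
      by (metis mset_filter size_mset)
    also have "\<dots> = num_non_K2_components n E"
      unfolding P_def by (rule count_cliques[OF g uc sp])
    finally show ?thesis .
  qed
  have memP: "x \<in># filter_mset P (mset es) \<longleftrightarrow> x \<in> set es \<and> P x" for x by simp
  have part1: "(\<forall>x \<in># eigenvalues_mset ?A. x = 1 \<or> x = -1) \<longrightarrow> perfect_matching n E"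
  proof
    assume h: "\<forall>x \<in># eigenvalues_mset ?A. x = 1 \<or> x = -1"
    then have all: "\<forall>e\<in>set es. e = 1 \<or> e = -1" using ev by simp
    then have "\<forall>e\<in>set es. e \<ge> -1" by auto
    then have uc: "union_of_cliques n E" using cliques[OF g sp] by blast
    have "filter P es = []" using all unfolding P_def by (auto simp: filter_empty_conv)
    then have e0: "filter_mset P (mset es) = {#}" by (metis mset_filter mset.simps(1))
    have "num_non_K2_components n E = 0" by (metis cnt[OF uc] e0 size_empty)
    then have none: "{C \<in> components n E. card C \<noteq> 2} = {}"
      unfolding num_non_K2_components_def components_def by simp
    show "perfect_matching n E"
      unfolding perfect_matching_def
    proof (intro allI impI)
      fix v assume v: "v < n"
      have set: "{u. E v u} = component n E v - {v}"
        using E_iff[OF g uc v] by auto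
      have "component n E v \<in> components n E" using v unfolding components_def by simp
      then have c2: "card (component n E v) = 2" using none by blast
      show "card {u. E v u} = 1"
        unfolding set using c2 cmp_self[OF g uc v] cmp_fin[OF g uc] by simp
    qed
  qed
  have part2: "size (filter_mset (\<lambda>x. x \<noteq> 1 \<and> x \<noteq> -1) (eigenvalues_mset ?A)) = 1
           \<longrightarrow> union_of_cliques n E \<and> num_non_K2_components n E = 1"
  proof
    assume h: "size (filter_mset (\<lambda>x. x \<noteq> 1 \<and> x \<noteq> -1) (eigenvalues_mset ?A)) = 1"
    then have h1: "size (filter_mset P (mset es)) = 1" using ev unfolding P_def by simp
    then obtain mu where mu: "filter_mset P (mset es) = {#mu#}" using size_1_singleton_mset by blast
    have oth: "e = mu" if "e \<in> set es" "P e" for e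
    proof -
      have "e \<in># filter_mset P (mset es)" using that by simp
      then show ?thesis using mu by simp
    qed
    have "(\<forall>e\<in>set es. e \<ge> -1) \<or> (\<forall>e\<in>set es. e \<le> 1)"
    proof (cases "mu \<ge> -1")
      case True
      have "e \<ge> -1" if "e \<in> set es" for e
        using oth[OF that] True unfolding P_def by fastforce
      then show ?thesis by blast
    next
      case False
      have "e \<le> 1" if "e \<in> set es" for e
        using oth[OF that] False unfolding P_def by fastforce
      then show ?thesis by blast
    qed
    then have uc: "union_of_cliques n E" using cliques[OF g sp] by blast
    then show "union_of_cliques n E \<and> num_non_K2_components n E = 1" using cnt[OF uc] h1 by simp
  qed
  have part3: "\<forall>r s :: real. r \<ge> s \<and>
           filter_mset (\<lambda>x. x \<noteq> 1 \<and> x \<noteq> -1) (eigenvalues_mset ?A) = {#r, s#}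
           \<longrightarrow> (r > 1 \<and> s < -1) \<or> (union_of_cliques n E \<and> num_non_K2_components n E = 2)"
  proof (intro allI impI)
    fix r s :: real
    assume h: "r \<ge> s \<and> filter_mset (\<lambda>x. x \<noteq> 1 \<and> x \<noteq> -1) (eigenvalues_mset ?A) = {#r, s#}"
    then have rs: "r \<ge> s" and f: "filter_mset P (mset es) = {#r, s#}" using ev unfolding P_def by auto
    have oth: "e = r \<or> e = s" if "e \<in> set es" "P e" for e
    proof -
      have "e \<in># filter_mset P (mset es)" using that by simp
      then show ?thesis using f by simp
    qed
    have Pr: "P r" and Ps: "P s"
    proof -
      have "r \<in># filter_mset P (mset es)" "s \<in># filter_mset P (mset es)" using f by simp_all
      then show "P r" "P s" by simp_all
    qed
    show "(r > 1 \<and> s < -1) \<or> (union_of_cliques n E \<and> num_non_K2_components n E = 2)"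
    proof (cases "r > 1 \<and> s < -1")
      case True then show ?thesis by blast
    next
      case False
      have "(\<forall>e\<in>set es. e \<ge> -1) \<or> (\<forall>e\<in>set es. e \<le> 1)"
      proof (cases "s \<ge> -1")
        case True
        have "e \<ge> -1" if "e \<in> set es" for e
          using oth[OF that] True rs unfolding P_def by fastforce
        then show ?thesis by blast
      next
        case nT: False
        then have "r \<le> 1" using False by auto
        have "e \<le> 1" if "e \<in> set es" for e
          using oth[OF that] \<open>r \<le> 1\<close> rs unfolding P_def by fastforce
        then show ?thesis by blast
      qed
      then have uc: "union_of_cliques n E" using cliques[OF g sp] by blast
      then show ?thesis using cnt[OF uc] f by simp
    qed
  qed
  show ?thesis using part1 part2 part3 by blast
qed

end
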